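(* Let $G$ be a finite simple unmixed graph and suppose the graph $\mathcal{G}=\mathcal{G}_{I_c(G)}$ is a tree. Then $I_c(G)$ is linearly presented if and only if for every path $\{C_1,\ldots,C_n\}$ of $\mathcal{G}$ one has $\alpha_0(G)\ge n-1$ and $\left|\bigcap_{j=1}^n C_j\right|=\alpha_0(G)-(n-1)$.
   Context: $G$ has vertices $t_1,\ldots,t_s$; $S=K[t_1,\ldots,t_s]$, $K$ a field. $G$ is unmixed if all minimal vertex covers (inclusion-minimal vertex sets meeting every edge) have the same size $\alpha_0(G)$. $I_c(G)$ is generated by $\prod_{t_i\in C}t_i$ over minimal vertex covers $C$. The graph $\mathcal{G}$ has the minimal vertex covers as vertices, with $\{C_i,C_j\}$ ($i\ne j$) an edge iff $|C_i\cup C_j|=|C_i|+1$. A path $\{C_1,\ldots,C_n\}$ is a sequence of distinct vertices with $\{C_i,C_{i+1}\}$ an edge for all $i$. A monomial ideal minimally generated by $u_1,\dots,u_r$ is linearly presented if all $u_i$ have the same degree and the kernel of $S^r\to S$, $e_i\mapsto u_i$, is generated by vectors with linear-form entries. *)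

theory Defs
  imports Main "HOL-Library.Poly_Mapping"
begin

type_synonym ('a, 'k) mpoly = "('a \<Rightarrow>\<^sub>0 nat) \<Rightarrow>\<^sub>0 'k"

definition Var :: "'a \<Rightarrow> ('a, 'k::comm_ring_1) mpoly" where
  "Var x = Poly_Mapping.single (Poly_Mapping.single x 1) 1"

definition mdeg :: "('a \<Rightarrow>\<^sub>0 nat) \<Rightarrow> nat" where
  "mdeg m = (\<Sum>x\<in>Poly_Mapping.keys m. Poly_Mapping.lookup m x)"

definition homogeneous_of_degree :: "nat \<Rightarrow> ('a, 'k::zero) mpoly \<Rightarrow> bool" where
  "homogeneous_of_degree d p \<longleftrightarrow> (\<forall>m\<in>Poly_Mapping.keys p. mdeg m = d)"

definition linear_form :: "('a, 'k::zero) mpoly \<Rightarrow> bool" where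
  "linear_form p \<longleftrightarrow> homogeneous_of_degree 1 p"

text \<open>Kernel of S^I \<rightarrow> S, e_i \<mapsto> u_i (vectors = functions on I, zero outside I).\<close>
definition syzygies :: "'i set \<Rightarrow> ('i \<Rightarrow> ('a,'k::comm_ring_1) mpoly) \<Rightarrow> ('i \<Rightarrow> ('a,'k) mpoly) set" where
  "syzygies I u = {v. (\<forall>i. i \<notin> I \<longrightarrow> v i = 0) \<and> (\<Sum>i\<in>I. v i * u i) = 0}"

definition module_span :: "('i \<Rightarrow> ('a,'k::comm_ring_1) mpoly) set \<Rightarrow> ('i \<Rightarrow> ('a,'k) mpoly) set" where
  "module_span L = {v. \<exists>F c. finite F \<and> F \<subseteq> L \<and> v = (\<lambda>i. \<Sum>g\<in>F. c g * g i)}"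

text \<open>Linear presentation of the monomial ideal minimally generated by the family u_i, i in I.\<close>
definition linearly_presented :: "'i set \<Rightarrow> ('i \<Rightarrow> ('a,'k::comm_ring_1) mpoly) \<Rightarrow> bool" where
  "linearly_presented I u \<longleftrightarrow>
     (\<exists>d. \<forall>i\<in>I. homogeneous_of_degree d (u i)) \<and>
     syzygies I u = module_span {v \<in> syzygies I u. \<forall>i. linear_form (v i)}"

definition simple_graph :: "'a set set \<Rightarrow> bool" where
  "simple_graph E \<longleftrightarrow> (\<forall>e\<in>E. card e = 2)"

definition vertex_cover :: "'a set set \<Rightarrow> 'a set \<Rightarrow> bool" where
  "vertex_cover E C \<longleftrightarrow> (\<forall>e\<in>E. e \<inter> C \<noteq> {})"

definition min_covers :: "'a set set \<Rightarrow> 'a set set" where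
  "min_covers E = {C. vertex_cover E C \<and> (\<forall>D. D \<subset> C \<longrightarrow> \<not> vertex_cover E D)}"

definition unmixed :: "'a set set \<Rightarrow> bool" where
  "unmixed E \<longleftrightarrow> (\<forall>C\<in>min_covers E. \<forall>D\<in>min_covers E. card C = card D)"

definition alpha0 :: "'a set set \<Rightarrow> nat" where
  "alpha0 E = Min (card ` {C. vertex_cover E C})"

definition cover_monomial :: "'a set \<Rightarrow> ('a,'k::comm_ring_1) mpoly" where
  "cover_monomial C = (\<Prod>x\<in>C. Var x)"

definition cover_adj :: "'a set \<Rightarrow> 'a set \<Rightarrow> bool" where
  "cover_adj C D \<longleftrightarrow> C \<noteq> D \<and> card (C \<union> D) = card C + 1"

definition is_path :: "'v set \<Rightarrow> ('v \<Rightarrow> 'v \<Rightarrow> bool) \<Rightarrow> 'v list \<Rightarrow> bool" where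
  "is_path V adj ps \<longleftrightarrow> ps \<noteq> [] \<and> distinct ps \<and> set ps \<subseteq> V \<and>
     (\<forall>i. Suc i < length ps \<longrightarrow> adj (ps ! i) (ps ! Suc i))"

definition connected_graph :: "'v set \<Rightarrow> ('v \<Rightarrow> 'v \<Rightarrow> bool) \<Rightarrow> bool" where
  "connected_graph V adj \<longleftrightarrow>
     (\<forall>x\<in>V. \<forall>y\<in>V. \<exists>ps. is_path V adj ps \<and> hd ps = x \<and> last ps = y)"

definition has_cycle :: "'v set \<Rightarrow> ('v \<Rightarrow> 'v \<Rightarrow> bool) \<Rightarrow> bool" where
  "has_cycle V adj \<longleftrightarrow> (\<exists>ps. is_path V adj ps \<and> length ps \<ge> 3 \<and> adj (last ps) (hd ps))"

definition is_tree :: "'v set \<Rightarrow> ('v \<Rightarrow> 'v \<Rightarrow> bool) \<Rightarrow> bool" where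
  "is_tree V adj \<longleftrightarrow> V \<noteq> {} \<and> connected_graph V adj \<and> \<not> has_cycle V adj"

end

theory Submission
  imports Defs
begin

definition mC :: "'a::finite set \<Rightarrow> ('a \<Rightarrow>\<^sub>0 nat)" where
  "mC X = Abs_poly_mapping (\<lambda>x. if x \<in> X then 1 else 0)"

lemma lookup_mC: "Poly_Mapping.lookup (mC X) x = (if x \<in> X then 1 else 0)"
  unfolding mC_def by (subst lookup_Abs_poly_mapping) auto

definition dv :: "('a \<Rightarrow>\<^sub>0 nat) \<Rightarrow> ('a \<Rightarrow>\<^sub>0 nat) \<Rightarrow> bool" where
  "dv m y \<longleftrightarrow> (\<forall>x. Poly_Mapping.lookup m x \<le> Poly_Mapping.lookup y x)"

lemma add_eq_iff_dv: "(y = l + m) \<longleftrightarrow> (dv m y \<and> l = y - m)" for y l m :: "'a \<Rightarrow>\<^sub>0 nat"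
  unfolding poly_mapping_eq_iff fun_eq_iff lookup_add lookup_minus dv_def
  by (metis add_diff_cancel_right' le_add2 le_add_diff_inverse2)

lemma dv_diff_add: "dv m y \<Longrightarrow> y - m + m = y" for y m :: "'a \<Rightarrow>\<^sub>0 nat"
  using add_eq_iff_dv by metis

lemma lookup_single_mult:
  "Poly_Mapping.lookup (Poly_Mapping.single \<nu> a * p) y =
     (if dv \<nu> y then a * Poly_Mapping.lookup p (y - \<nu>) else 0)"
  for p :: "('a \<Rightarrow>\<^sub>0 nat) \<Rightarrow>\<^sub>0 'k::comm_ring_1"
proof -
  have "Poly_Mapping.lookup (Poly_Mapping.single \<nu> a * p) y =
     (\<Sum>l. Poly_Mapping.lookup (Poly_Mapping.single \<nu> a) l *
        (\<Sum>q. Poly_Mapping.lookup p q when y = l + q))"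
    by (rule lookup_mult)
  also have "\<dots> = (\<Sum>l. (a * (\<Sum>q. Poly_Mapping.lookup p q when y = l + q)) when \<nu> = l)"
    by (simp add: lookup_single when_mult)
  also have "\<dots> = a * (\<Sum>q. Poly_Mapping.lookup p q when y = \<nu> + q)"
    by simp
  also have "(\<lambda>q. Poly_Mapping.lookup p q when y = \<nu> + q) =
      (\<lambda>q. (if dv \<nu> y then Poly_Mapping.lookup p q else 0) when q = y - \<nu>)"
    using add_eq_iff_dv[of y _ \<nu>] by (auto simp: when_def add.commute fun_eq_iff)
  finally show ?thesis by simp
qed

lemma lookup_mult_single:
  "Poly_Mapping.lookup (p * Poly_Mapping.single \<nu> a) y =
     (if dv \<nu> y then a * Poly_Mapping.lookup p (y - \<nu>) else 0)"
  for p :: "('a \<Rightarrow>\<^sub>0 nat) \<Rightarrow>\<^sub>0 'k::comm_ring_1"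
  by (subst mult.commute) (rule lookup_single_mult)

lemma poly_expand:
  assumes "finite S" "Poly_Mapping.keys c \<subseteq> S"
  shows "(\<Sum>\<nu>\<in>S. Poly_Mapping.single \<nu> (Poly_Mapping.lookup c \<nu>)) = c"
proof (rule poly_mapping_eqI)
  fix k
  have "Poly_Mapping.lookup (\<Sum>\<nu>\<in>S. Poly_Mapping.single \<nu> (Poly_Mapping.lookup c \<nu>)) k
     = (\<Sum>\<nu>\<in>S. if \<nu> = k then Poly_Mapping.lookup c \<nu> else 0)"
    by (simp add: lookup_sum lookup_single when_def)
  also have "\<dots> = Poly_Mapping.lookup c k"
    using assms by (auto simp: in_keys_iff)
  finally show "Poly_Mapping.lookup (\<Sum>\<nu>\<in>S. Poly_Mapping.single \<nu> (Poly_Mapping.lookup c \<nu>)) k = Poly_Mapping.lookup c k" .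
qed

lemma keys_mC: "Poly_Mapping.keys (mC X) = X"
  by (auto simp: in_keys_iff lookup_mC split: if_splits)

lemma mdeg_mC: "mdeg (mC X) = card X"
  unfolding mdeg_def keys_mC by (simp add: lookup_mC)

lemma mC_insert: "x \<notin> F \<Longrightarrow> mC (insert x F) = Poly_Mapping.single x 1 + mC F"
  by (rule poly_mapping_eqI) (auto simp: lookup_add lookup_mC lookup_single when_def)

lemma cover_monomial_eq:
  "(cover_monomial C :: ('a::finite,'k::comm_ring_1) mpoly) = Poly_Mapping.single (mC C) 1"
proof -
  have "finite C" by simp
  then show ?thesis
  proof (induction C rule: finite_induct)
    case empty
    have "mC {} = (0 :: 'a \<Rightarrow>\<^sub>0 nat)" by (rule poly_mapping_eqI) (simp add: lookup_mC)
    then show ?case by (simp add: cover_monomial_def)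
  next
    case (insert x F)
    then show ?case
      by (simp add: cover_monomial_def Var_def mC_insert mult_single)
  qed
qed

lemma succ_nth: "successively P xs \<longleftrightarrow> (\<forall>i. Suc i < length xs \<longrightarrow> P (xs!i) (xs!Suc i))"
proof (induction P xs rule: successively.induct)
  case (3 P x y xs)
  show ?case
  proof
    assume h: "successively P (x # y # xs)"
    show "\<forall>i. Suc i < length (x # y # xs) \<longrightarrow> P ((x # y # xs) ! i) ((x # y # xs) ! Suc i)"
    proof (intro allI impI)
      fix i assume "Suc i < length (x # y # xs)"
      then show "P ((x # y # xs) ! i) ((x # y # xs) ! Suc i)"
        using h 3 by (cases i) auto
    qed
  next
    assume h: "\<forall>i. Suc i < length (x # y # xs) \<longrightarrow> P ((x # y # xs) ! i) ((x # y # xs) ! Suc i)"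
    have "P x y" using h[rule_format, of 0] by simp
    moreover have "\<forall>i. Suc i < length (y # xs) \<longrightarrow> P ((y # xs) ! i) ((y # xs) ! Suc i)"
      using h by (metis Suc_less_eq length_Cons nth_Cons_Suc)
    ultimately show "successively P (x # y # xs)" using 3 by simp
  qed
qed auto

lemma is_path_succ: "is_path V adj ps \<longleftrightarrow> ps \<noteq> [] \<and> distinct ps \<and> set ps \<subseteq> V \<and> successively adj ps"
  unfolding is_path_def succ_nth by blast

lemma is_path_take: "is_path V adj ps \<Longrightarrow> 0 < n \<Longrightarrow> is_path V adj (take n ps)"
  unfolding is_path_succ
  by (metis append_take_drop_id distinct_take set_take_subset successively_append_iff take_eq_Nil
      order_trans less_numeral_extra(3))

lemma is_path_drop: "is_path V adj ps \<Longrightarrow> n < length ps \<Longrightarrow> is_path V adj (drop n ps)"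
  unfolding is_path_succ
  by (metis append_take_drop_id distinct_drop set_drop_subset successively_append_iff drop_eq_Nil
      order_trans not_le)

lemma is_path_extend:
  assumes "is_path A adj ps" "Y \<in> A" "adj (last ps) Y"
  shows "\<exists>qs. is_path A adj qs \<and> hd qs = hd ps \<and> last qs = Y"
proof (cases "Y \<in> set ps")
  case True
  then obtain a b where ab: "ps = a @ Y # b" by (meson split_list)
  have "is_path A adj (a @ [Y])"
    using assms(1) unfolding is_path_succ ab by (auto simp: successively_append_iff)
  moreover have "hd (a @ [Y]) = hd ps" using ab by (cases a) auto
  ultimately show ?thesis by force
next
  case False
  have "is_path A adj (ps @ [Y])"
    using assms False unfolding is_path_succ by (auto simp: successively_append_iff)
  moreover have "hd (ps @ [Y]) = hd ps" using assms(1) unfolding is_path_def by simp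
  ultimately show ?thesis by force
qed

lemma path_unique:
  assumes sym: "\<And>x y. x \<in> V \<Longrightarrow> y \<in> V \<Longrightarrow> adj x y \<Longrightarrow> adj y x"
    and nc: "\<not> has_cycle V adj"
  shows "is_path V adj p \<Longrightarrow> is_path V adj q \<Longrightarrow> hd p = hd q \<Longrightarrow> last p = last q \<Longrightarrow> p = q"
proof (induction p arbitrary: q)
  case Nil
  then show ?case by (simp add: is_path_def)
next
  case (Cons a p')
  from Cons.prems obtain q' where q: "q = a # q'" unfolding is_path_def by (cases q) auto
  have pp: "a \<notin> set p'" "distinct p'" "set p' \<subseteq> V" "a \<in> V" "successively adj (a # p')"
    using Cons.prems(1) unfolding is_path_succ by auto
  have qq: "a \<notin> set q'" "distinct q'" "set q' \<subseteq> V" "successively adj (a # q')"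
    using Cons.prems(2) unfolding is_path_succ q by auto
  show ?case
  proof (cases "p' = [] \<or> q' = []")
    case True
    then show ?thesis using Cons.prems(4) pp(1) qq(1) q by (auto simp: last_in_set split: if_splits)
  next
    case False
    then have ne: "p' \<noteq> []" "q' \<noteq> []" by auto
    have lst: "last p' = last q'" using Cons.prems(4) ne q by simp
    have pp': "is_path V adj p'" "is_path V adj q'"
      using pp qq ne by (auto simp: is_path_succ successively_Cons)
    show ?thesis
    proof (cases "hd p' = hd q'")
      case True
      then show ?thesis using Cons.IH[OF pp'(1) pp'(2) True lst] q by simp
    next
      case hne: False
      have "\<exists>x\<in>set q'. x \<in> set p'" using lst ne by (metis last_in_set)
      then obtain q1 z q2 where qs: "q' = q1 @ z # q2" "z \<in> set p'" "\<forall>y\<in>set q1. y \<notin> set p'"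
        using split_list_first_prop[of q' "\<lambda>x. x \<in> set p'"] by blast
      obtain p1 p2 where ps: "p' = p1 @ z # p2" using qs(2) by (meson split_list)
      define cyc where "cyc = a # (p1 @ [z]) @ rev q1"
      have s1: "successively adj (p1 @ [z])"
        using pp(5) ps by (auto simp: successively_append_iff successively_Cons)
      have s2: "adj a (hd (p1 @ [z]))"
        using pp(5) ps ne by (cases p1) (auto simp: successively_Cons)
      have s3: "successively adj (rev q1)"
        using qq(4) qq(3) qs(1) sym
        by (auto simp: successively_append_iff successively_Cons intro!: successively_mono[of adj q1])
      have s4: "adj z (hd (rev q1))" if "q1 \<noteq> []"
      proof -
        have "adj (last q1) z" using qq(4) qs(1) that
          by (auto simp: successively_append_iff successively_Cons)
        moreover have "last q1 \<in> V" "z \<in> V" using qq(3) qs(1) that by auto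
        ultimately show ?thesis using sym that by (simp add: hd_rev)
      qed
      have "successively adj cyc"
      proof -
        have "successively adj (a # (p1@[z]))" using s1 s2 by (simp only: successively_Cons) simp
        moreover have e: "cyc = (a # (p1@[z])) @ rev q1" unfolding cyc_def by simp
        moreover have "last (a # (p1@[z])) = z" by simp
        moreover have "rev q1 = [] \<or> adj z (hd (rev q1))" using s4 by auto
        ultimately show ?thesis unfolding e successively_append_iff using s3 by simp
      qed
      moreover have "distinct cyc"
        unfolding cyc_def using pp(1,2) qq(1,2) qs ps by auto
      moreover have "set cyc \<subseteq> V" unfolding cyc_def using pp qq qs ps by auto
      ultimately have pc: "is_path V adj cyc" unfolding is_path_succ cyc_def by simp
      have len: "length cyc \<ge> 3"
      proof (cases "q1 = []")
        case True
        then have "z = hd q'" using qs by simp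
        then have "p1 \<noteq> []" using hne ps by auto
        then show ?thesis unfolding cyc_def by (cases p1) simp_all
      next
        case False
        then show ?thesis unfolding cyc_def by (cases q1) simp_all
      qed
      have cl: "adj (last cyc) (hd cyc)"
      proof (cases "q1 = []")
        case True
        then have "z = hd q'" using qs by simp
        then have "adj a z" using qq(4) ne by (cases q') auto
        moreover have "z \<in> V" using qs(2) pp(3) by auto
        ultimately have "adj z a" using sym pp(4) by blast
        then show ?thesis unfolding cyc_def using True by simp
      next
        case False
        then have "hd q1 = hd q'" using qs by simp
        then have "adj a (hd q1)" using qq(4) ne by (cases q') auto
        moreover have "hd q1 \<in> V" using False qq(3) qs(1) by auto
        ultimately show ?thesis unfolding cyc_def using False sym pp(4) by (simp add: last_rev)
      qed
      have "has_cycle V adj" unfolding has_cycle_def using pc len cl by blast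
      then show ?thesis using nc by simp
    qed
  qed
qed

lemma cover_UNIV: "simple_graph E \<Longrightarrow> vertex_cover E UNIV"
  unfolding simple_graph_def vertex_cover_def by (metis card.empty inf_top.right_neutral zero_neq_numeral)

lemma contains_min:
  fixes C :: "'a::finite set"
  shows "vertex_cover E C \<Longrightarrow> \<exists>D\<subseteq>C. D \<in> min_covers E"
proof (induction "card C" arbitrary: C rule: less_induct)
  case less
  show ?case
  proof (cases "C \<in> min_covers E")
    case True then show ?thesis by blast
  next
    case False
    then obtain D where "D \<subset> C" "vertex_cover E D" using less.prems unfolding min_covers_def by blast
    moreover then have "card D < card C" by (simp add: psubset_card_mono)
    ultimately show ?thesis using less.hyps by (meson order.trans psubset_imp_subset)
  qed
qed

lemma alpha0_eq:
  fixes E :: "'a::finite set set"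
  assumes "unmixed E" "C \<in> min_covers E"
  shows "alpha0 E = card C"
  unfolding alpha0_def
proof (rule Min_eqI)
  show "finite (card ` {C. vertex_cover E C})" by simp
  show "card C \<in> card ` {C. vertex_cover E C}" using assms(2) unfolding min_covers_def by auto
  fix y assume "y \<in> card ` {C. vertex_cover E C}"
  then obtain D where D: "vertex_cover E D" "y = card D" by auto
  then obtain D' where D': "D' \<subseteq> D" "D' \<in> min_covers E" using contains_min by blast
  have "card D' \<le> card D" using D'(1) by (simp add: card_mono)
  moreover have "card D' = card C" using assms D'(2) unfolding unmixed_def by blast
  ultimately have "card D' \<le> card D" "card D' = card C" by simp_all
  then show "card C \<le> y" using D by simp
qed

lemma span_base: "g \<in> L \<Longrightarrow> g \<in> module_span L"
  unfolding module_span_def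
  by (rule CollectI, rule exI[of _ "{g}"], rule exI[of _ "\<lambda>_. 1"]) simp

lemma span_zero: "(\<lambda>i. 0) \<in> module_span L"
  unfolding module_span_def by auto

lemma span_smult: "v \<in> module_span L \<Longrightarrow> (\<lambda>i. a * v i) \<in> module_span L"
proof -
  assume "v \<in> module_span L"
  then obtain F c where Fc: "finite F" "F \<subseteq> L" "v = (\<lambda>i. \<Sum>g\<in>F. c g * g i)"
    unfolding module_span_def by blast
  have "(\<lambda>i. a * v i) = (\<lambda>i. \<Sum>g\<in>F. (a * c g) * g i)"
    using Fc(3) by (simp add: sum_distrib_left mult.assoc)
  then show ?thesis unfolding module_span_def using Fc
    by (intro CollectI exI[of _ F] exI[of _ "\<lambda>g. a * c g"]) auto
qed

lemma span_add:
  assumes "v \<in> module_span L" "w \<in> module_span L"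
  shows "(\<lambda>i. v i + w i) \<in> module_span L"
proof -
  obtain F1 c1 where F1: "finite F1" "F1 \<subseteq> L" "v = (\<lambda>i. \<Sum>g\<in>F1. c1 g * g i)"
    using assms(1) unfolding module_span_def by blast
  obtain F2 c2 where F2: "finite F2" "F2 \<subseteq> L" "w = (\<lambda>i. \<Sum>g\<in>F2. c2 g * g i)"
    using assms(2) unfolding module_span_def by blast
  define c where "c g = (if g \<in> F1 then c1 g else 0) + (if g \<in> F2 then c2 g else 0)" for g
  have "(\<lambda>i. v i + w i) = (\<lambda>i. \<Sum>g\<in>F1 \<union> F2. c g * g i)"
  proof
    fix i
    have "(\<Sum>g\<in>F1 \<union> F2. c g * g i) = (\<Sum>g\<in>F1 \<union> F2. if g \<in> F1 then c1 g * g i else 0)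
       + (\<Sum>g\<in>F1 \<union> F2. if g \<in> F2 then c2 g * g i else 0)"
      unfolding sum.distrib[symmetric] by (rule sum.cong) (auto simp: c_def distrib_right)
    also have "(\<Sum>g\<in>F1 \<union> F2. if g \<in> F1 then c1 g * g i else 0) = (\<Sum>g\<in>(F1 \<union> F2) \<inter> F1. c1 g * g i)"
      by (rule sum.inter_restrict[symmetric]) (use F1 F2 in simp)
    also have "(\<Sum>g\<in>F1 \<union> F2. if g \<in> F2 then c2 g * g i else 0) = (\<Sum>g\<in>(F1 \<union> F2) \<inter> F2. c2 g * g i)"
      by (rule sum.inter_restrict[symmetric]) (use F1 F2 in simp)
    finally have "(\<Sum>g\<in>F1 \<union> F2. c g * g i) = (\<Sum>g\<in>(F1 \<union> F2) \<inter> F1. c1 g * g i) + (\<Sum>g\<in>(F1 \<union> F2) \<inter> F2. c2 g * g i)" .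
    moreover have "(F1 \<union> F2) \<inter> F1 = F1" "(F1 \<union> F2) \<inter> F2 = F2" by auto
    ultimately show "v i + w i = (\<Sum>g\<in>F1 \<union> F2. c g * g i)" using F1 F2 by simp
  qed
  then show ?thesis unfolding module_span_def using F1 F2
    by (intro CollectI exI[of _ "F1 \<union> F2"] exI[of _ c]) auto
qed

lemma span_sum:
  assumes "finite A" "\<And>a. a \<in> A \<Longrightarrow> f a \<in> module_span L"
  shows "(\<lambda>i. \<Sum>a\<in>A. f a i) \<in> module_span L"
  using assms
proof (induction A rule: finite_induct)
  case empty then show ?case by (simp add: span_zero)
next
  case (insert x F)
  have "(\<lambda>i. f x i + (\<Sum>a\<in>F. f a i)) \<in> module_span L"
    by (rule span_add) (use insert in auto)
  then show ?case using insert by simp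
qed

lemma span_diff:
  assumes "v \<in> module_span L" "w \<in> module_span L"
  shows "(\<lambda>i. v i - w i) \<in> module_span L"
proof -
  have "(\<lambda>i. v i + (-1) * w i) \<in> module_span L"
    by (rule span_add[OF assms(1) span_smult[OF assms(2)]])
  then show ?thesis by simp
qed

lemma span_syz:
  assumes "L \<subseteq> syzygies I u" "v \<in> module_span L"
  shows "v \<in> syzygies I u"
proof -
  obtain F c where Fc: "finite F" "F \<subseteq> L" "v = (\<lambda>i. \<Sum>g\<in>F. c g * g i)"
    using assms(2) unfolding module_span_def by blast
  have z: "\<forall>i. i \<notin> I \<longrightarrow> g i = 0" "(\<Sum>i\<in>I. g i * u i) = 0" if "g \<in> F" for g
    using that Fc(2) assms(1) unfolding syzygies_def by auto
  have "(\<Sum>i\<in>I. v i * u i) = (\<Sum>g\<in>F. c g * (\<Sum>i\<in>I. g i * u i))"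
    unfolding Fc(3) by (simp add: sum_distrib_right sum_distrib_left mult.assoc sum.swap[of _ I])
  also have "\<dots> = 0" using z by simp
  finally have s0: "(\<Sum>i\<in>I. v i * u i) = 0" .
  moreover have vz: "v i = 0" if "i \<notin> I" for i
    unfolding Fc(3)
  proof (rule sum.neutral, rule ballI)
    fix g assume "g \<in> F"
    then have "g i = 0" using z(1) that by blast
    then show "c g * g i = 0" by simp
  qed
  ultimately show ?thesis unfolding syzygies_def mem_Collect_eq by simp
qed

definition Fv :: "('a \<Rightarrow>\<^sub>0 nat) \<Rightarrow> 'a::finite set \<Rightarrow> 'a set \<Rightarrow> ('a,'k::comm_ring_1) mpoly" where
  "Fv y C X = (if X = C then Poly_Mapping.single (y - mC C) 1 else 0)"

lemma dv_mC: "dv (mC X) y \<longleftrightarrow> (\<forall>x\<in>X. 0 < Poly_Mapping.lookup y x)"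
  unfolding dv_def lookup_mC by (auto split: if_splits)

lemma dv_mC_mC: "dv (mC X) (mC Y) \<longleftrightarrow> X \<subseteq> Y"
  unfolding dv_mC lookup_mC by auto

lemma mC_diff: "Y \<subseteq> X \<Longrightarrow> mC X - mC Y = mC (X - Y)"
  by (rule poly_mapping_eqI) (auto simp: lookup_minus lookup_mC)

lemma diff_chain: "dv m M \<Longrightarrow> dv M y \<Longrightarrow> y - M + (M - m) = y - m"
  unfolding dv_def
proof (intro impI poly_mapping_eqI)
  fix k assume "\<forall>x. Poly_Mapping.lookup m x \<le> Poly_Mapping.lookup M x" "\<forall>x. Poly_Mapping.lookup M x \<le> Poly_Mapping.lookup y x"
  then have "Poly_Mapping.lookup m k \<le> Poly_Mapping.lookup M k" "Poly_Mapping.lookup M k \<le> Poly_Mapping.lookup y k" by auto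
  then show "Poly_Mapping.lookup (y - M + (M - m)) k = Poly_Mapping.lookup (y - m) k"
    by (simp add: lookup_add lookup_minus)
qed

lemma dv_diff_mono: "dv \<nu> (w - m) \<Longrightarrow> dv \<nu> w"
  unfolding dv_def lookup_minus by (meson diff_le_self order_trans)

lemma dv_swap: "dv m w \<Longrightarrow> dv \<nu> w \<Longrightarrow> dv \<nu> (w - m) \<longleftrightarrow> dv m (w - \<nu>)"
  unfolding dv_def lookup_minus by (auto, (metis add_le_imp_le_diff le_diff_conv2 add.commute)+)

lemma single_sum: "Poly_Mapping.single k (sum f A) = (\<Sum>x\<in>A. Poly_Mapping.single k (f x))"
proof (cases "finite A")
  case True then show ?thesis by (induction A rule: finite_induct) (simp_all add: single_add)
next
  case False then show ?thesis by simp
qed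

lemma linear_form_single: "mdeg m = 1 \<Longrightarrow> linear_form (Poly_Mapping.single m c)"
  unfolding linear_form_def homogeneous_of_degree_def by simp

lemma linear_form_uminus: "linear_form p \<Longrightarrow> linear_form (- p)" for p :: "('a,'k::comm_ring_1) mpoly"
  unfolding linear_form_def homogeneous_of_degree_def by (simp add: in_keys_iff)

lemma linear_form_zero: "linear_form 0"
  unfolding linear_form_def homogeneous_of_degree_def by simp

lemma syz_coeff:
  assumes "v \<in> syzygies I (\<lambda>C. cover_monomial C :: ('a::finite,'k::comm_ring_1) mpoly)" "finite I"
  shows "(\<Sum>C\<in>{C\<in>I. dv (mC C) y}. Poly_Mapping.lookup (v C) (y - mC C)) = 0"
proof -
  have "0 = Poly_Mapping.lookup (\<Sum>i\<in>I. v i * (cover_monomial i :: ('a,'k) mpoly)) y"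
    using assms(1) unfolding syzygies_def by simp
  also have "\<dots> = (\<Sum>i\<in>I. if dv (mC i) y then Poly_Mapping.lookup (v i) (y - mC i) else 0)"
    by (auto simp: lookup_sum cover_monomial_eq lookup_mult_single intro!: sum.cong)
  also have "\<dots> = (\<Sum>C\<in>{C\<in>I. dv (mC C) y}. Poly_Mapping.lookup (v C) (y - mC C))"
    by (simp add: sum.inter_filter[OF assms(2)])
  finally show ?thesis by simp
qed

lemma Fdiff_syz:
  assumes "a \<in> I" "b \<in> I" "a \<noteq> b" "dv (mC a) M" "dv (mC b) M" "finite I"
  shows "(\<lambda>X. Fv M a X - Fv M b X) \<in> syzygies I (\<lambda>C. cover_monomial C :: ('a::finite,'k::comm_ring_1) mpoly)"
proof -
  have e: "(Fv M a X - Fv M b X) * (cover_monomial X :: ('a,'k) mpoly) =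
      (if X = a then Poly_Mapping.single M 1 else 0) - (if X = b then Poly_Mapping.single M 1 else 0)" for X
    using assms(3) by (auto simp: Fv_def cover_monomial_eq mult_single dv_diff_add assms(4,5) left_diff_distrib)
  have "(\<Sum>X\<in>I. (Fv M a X - Fv M b X) * (cover_monomial X :: ('a,'k) mpoly)) =
     (\<Sum>X\<in>I. (if X = a then Poly_Mapping.single M 1 else 0)) - (\<Sum>X\<in>I. (if X = b then Poly_Mapping.single M 1 else 0))"
    unfolding e by (simp add: sum_subtractf)
  also have "\<dots> = 0" using assms(1,2,6) by simp
  finally show ?thesis unfolding syzygies_def using assms(1,2) by (auto simp: Fv_def)
qed

lemma card_diff_one:
  fixes a b :: "'a::finite set"
  assumes "cover_adj a b" "card a = card b"
  shows "card (b - a) = 1" "card (a - b) = 1"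
proof -
  have f: "finite a" "finite b" by simp_all
  have "card (a \<union> (b - a)) = card a + card (b - a)" by (rule card_Un_disjoint) auto
  moreover have "card (b \<union> (a - b)) = card b + card (a - b)" by (rule card_Un_disjoint) auto
  moreover have "a \<union> (b - a) = a \<union> b" "b \<union> (a - b) = a \<union> b" by auto
  ultimately have "card (a \<union> b) = card a + card (b - a)" "card (a \<union> b) = card b + card (a - b)"
    by simp_all
  then show "card (b - a) = 1" "card (a - b) = 1" using assms unfolding cover_adj_def by simp_all
qed

abbreviation LS :: "'a set set \<Rightarrow> ('a set \<Rightarrow> ('a::finite,'k::comm_ring_1) mpoly) set" where
  "LS I \<equiv> {v \<in> syzygies I (\<lambda>C. cover_monomial C). \<forall>i. linear_form (v i)}"

lemma adj_in_L:
  assumes "a \<in> I" "b \<in> I" "cover_adj a b" "card a = card b" "finite I"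
  shows "(\<lambda>X. Fv (mC (a \<union> b)) a X - Fv (mC (a \<union> b)) b X) \<in> (LS I :: ('a set \<Rightarrow> ('a::finite,'k::comm_ring_1) mpoly) set)"
proof -
  have ab: "a \<noteq> b" using assms(3) unfolding cover_adj_def by simp
  have syz: "(\<lambda>X. Fv (mC (a \<union> b)) a X - Fv (mC (a \<union> b)) b X) \<in> syzygies I (\<lambda>C. cover_monomial C :: ('a,'k) mpoly)"
    by (rule Fdiff_syz) (use assms ab in \<open>auto simp: dv_mC_mC\<close>)
  have c: "card (b - a) = 1" "card (a - b) = 1" using card_diff_one assms by blast+
  have "linear_form (Fv (mC (a \<union> b)) a X - Fv (mC (a \<union> b)) b X :: ('a,'k) mpoly)" for X
  proof -
    have ma: "mC (a \<union> b) - mC a = mC (b - a)" by (subst mC_diff) (auto intro: arg_cong[where f=mC])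
    have mb: "mC (a \<union> b) - mC b = mC (a - b)" by (subst mC_diff) (auto intro: arg_cong[where f=mC])
    show ?thesis
    proof (cases "X = a")
      case True
      then show ?thesis using ab c by (simp add: Fv_def ma mdeg_mC linear_form_single)
    next
      case False
      then show ?thesis using ab c
        by (cases "X = b") (simp_all add: Fv_def mb mdeg_mC linear_form_single linear_form_uminus linear_form_zero)
    qed
  qed
  then show ?thesis using syz by simp
qed

lemma adj_step:
  assumes "a \<in> I" "b \<in> I" "cover_adj a b" "card a = card b" "finite I" "dv (mC (a \<union> b)) y"
  shows "(\<lambda>X. Fv y a X - Fv y b X) \<in> module_span (LS I :: ('a set \<Rightarrow> ('a::finite,'k::comm_ring_1) mpoly) set)"
proof -
  define M where "M = mC (a \<union> b)"
  have ab: "a \<noteq> b" using assms(3) unfolding cover_adj_def by simp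
  have da: "dv (mC a) M" "dv (mC b) M" unfolding M_def by (auto simp: dv_mC_mC)
  have "(\<lambda>X. Fv y a X - Fv y b X :: ('a,'k) mpoly) = (\<lambda>X. Poly_Mapping.single (y - M) 1 * (Fv M a X - Fv M b X))"
  proof
    fix X
    show "(Fv y a X - Fv y b X :: ('a,'k) mpoly) = Poly_Mapping.single (y - M) 1 * (Fv M a X - Fv M b X)"
    proof (cases "X = a")
      case True
      then have "X \<noteq> b" using ab by simp
      then show ?thesis using True da assms(6) unfolding M_def[symmetric]
        by (simp add: Fv_def mult_single diff_chain)
    next
      case False
      show ?thesis
      proof (cases "X = b")
        case True
        then show ?thesis using False da assms(6) unfolding M_def[symmetric]
          by (simp add: Fv_def mult_single diff_chain flip: single_uminus)
      next
        case False2: False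
        then show ?thesis using False by (simp add: Fv_def)
      qed
    qed
  qed
  moreover have "(\<lambda>X. Fv M a X - Fv M b X) \<in> (LS I :: ('a set \<Rightarrow> ('a,'k) mpoly) set)"
    unfolding M_def by (rule adj_in_L[OF assms(1-5)])
  ultimately show ?thesis by (simp add: span_smult span_base)
qed

lemma path_chain:
  assumes "\<forall>C\<in>I. \<forall>D\<in>I. card C = card D" "finite I"
  shows "successively cover_adj ps \<Longrightarrow> set ps \<subseteq> I \<Longrightarrow> ps \<noteq> [] \<Longrightarrow> (\<forall>X\<in>set ps. dv (mC X) y) \<Longrightarrow>
    (\<lambda>X. Fv y (hd ps) X - Fv y (last ps) X) \<in> module_span (LS I :: ('a set \<Rightarrow> ('a::finite,'k::comm_ring_1) mpoly) set)"
proof (induction ps)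
  case Nil then show ?case by simp
next
  case (Cons a ps)
  show ?case
  proof (cases "ps = []")
    case True
    have e: "(\<lambda>X. Fv y (hd (a # ps)) X - Fv y (last (a # ps)) X :: ('a,'k) mpoly) = (\<lambda>X. 0)"
      using True by simp
    show ?thesis unfolding e by (rule span_zero)
  next
    case False
    then obtain b ps' where ps: "ps = b # ps'" by (cases ps) auto
    have s1: "successively cover_adj ps" using Cons.prems(1) False by (simp add: successively_Cons)
    have s2: "set ps \<subseteq> I" using Cons.prems(2) by simp
    have s3: "\<forall>X\<in>set ps. dv (mC X) y" using Cons.prems(4) by simp
    have ih: "(\<lambda>X. Fv y b X - Fv y (last ps) X) \<in> module_span (LS I :: ('a set \<Rightarrow> ('a,'k) mpoly) set)"
      using Cons.IH[OF s1 s2 False s3] ps by simp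
    have st: "(\<lambda>X. Fv y a X - Fv y b X) \<in> module_span (LS I :: ('a set \<Rightarrow> ('a,'k) mpoly) set)"
    proof (rule adj_step)
      show "a \<in> I" "b \<in> I" using Cons.prems(2) ps by auto
      show "cover_adj a b" using Cons.prems(1) ps by simp
      show "card a = card b" using assms(1) \<open>a \<in> I\<close> \<open>b \<in> I\<close> by blast
      show "finite I" by fact
      have "a \<in> set (a # ps)" "b \<in> set (a # ps)" using ps by auto
      then have "dv (mC a) y" "dv (mC b) y" using Cons.prems(4) by blast+
      then show "dv (mC (a \<union> b)) y" unfolding dv_mC by blast
    qed
    have "(\<lambda>X. (Fv y a X - Fv y b X) + (Fv y b X - Fv y (last ps) X)) \<in> module_span (LS I :: ('a set \<Rightarrow> ('a,'k) mpoly) set)"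
      by (rule span_add[OF st ih])
    moreover have "(\<lambda>X. (Fv y a X - Fv y b X) + (Fv y b X - Fv y (last ps) X) :: ('a,'k) mpoly)
       = (\<lambda>X. Fv y (hd (a # ps)) X - Fv y (last (a # ps)) X)"
      using False by simp
    ultimately show ?thesis by simp
  qed
qed

lemma lp_if:
  fixes I :: "'a::finite set set"
  assumes fin: "finite I"
    and eqc: "\<forall>C\<in>I. \<forall>D\<in>I. card C = card D"
    and paths: "\<And>C D. C \<in> I \<Longrightarrow> D \<in> I \<Longrightarrow>
       \<exists>ps. is_path I cover_adj ps \<and> hd ps = C \<and> last ps = D \<and> (\<forall>X\<in>set ps. X \<subseteq> C \<union> D)"
    and v: "v \<in> syzygies I (\<lambda>C. cover_monomial C :: ('a,'k::comm_ring_1) mpoly)"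
  shows "v \<in> module_span (LS I :: ('a set \<Rightarrow> ('a,'k) mpoly) set)"
proof -
  define a where "a p = Poly_Mapping.lookup (v (fst p)) (snd p)" for p
  define P where "P = Sigma I (\<lambda>C. Poly_Mapping.keys (v C))"
  define vec :: "'a set \<times> ('a \<Rightarrow>\<^sub>0 nat) \<Rightarrow> 'a set \<Rightarrow> ('a,'k) mpoly"
    where "vec p X = (if X = fst p then Poly_Mapping.single (snd p) 1 else 0)" for p X
  define wt where "wt p = snd p + mC (fst p)" for p :: "'a set \<times> ('a \<Rightarrow>\<^sub>0 nat)"
  have finP: "finite P" unfolding P_def using fin by auto
  have vout: "v X = 0" if "X \<notin> I" for X using v that unfolding syzygies_def by auto
  have dec: "v X = (\<Sum>p\<in>P. Poly_Mapping.single 0 (a p) * vec p X)" for X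
  proof -
    have "(\<Sum>p\<in>P. Poly_Mapping.single 0 (a p) * vec p X) =
       (\<Sum>C\<in>I. \<Sum>\<mu>\<in>Poly_Mapping.keys (v C). Poly_Mapping.single 0 (a (C,\<mu>)) * vec (C,\<mu>) X)"
      unfolding P_def using fin by (simp add: sum.Sigma)
    also have "\<dots> = (\<Sum>C\<in>I. if X = C then v C else 0)"
    proof (rule sum.cong[OF refl])
      fix C assume "C \<in> I"
      show "(\<Sum>\<mu>\<in>Poly_Mapping.keys (v C). Poly_Mapping.single 0 (a (C,\<mu>)) * vec (C,\<mu>) X) = (if X = C then v C else 0)"
      proof (cases "X = C")
        case True
        have "(\<Sum>\<mu>\<in>Poly_Mapping.keys (v C). Poly_Mapping.single 0 (a (C,\<mu>)) * vec (C,\<mu>) X)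
            = (\<Sum>\<mu>\<in>Poly_Mapping.keys (v C). Poly_Mapping.single \<mu> (Poly_Mapping.lookup (v C) \<mu>))"
          using True by (simp add: vec_def a_def mult_single)
        also have "\<dots> = v C" by (rule poly_expand) auto
        finally show ?thesis using True by simp
      next
        case False
        then show ?thesis by (simp add: vec_def)
      qed
    qed
    also have "\<dots> = v X" using vout fin by (simp add: eq_commute[of X])
    finally show ?thesis by simp
  qed
  have img: "(\<Sum>p\<in>P. Poly_Mapping.single 0 (a p) * vec p X) =
     (\<Sum>y\<in>wt ` P. \<Sum>p\<in>{p. p \<in> P \<and> wt p = y}. Poly_Mapping.single 0 (a p) * vec p X)" for X
    by (rule sum.image_gen[OF finP])
  have vdec: "v = (\<lambda>X. \<Sum>y\<in>wt ` P. \<Sum>p\<in>{p. p \<in> P \<and> wt p = y}. Poly_Mapping.single 0 (a p) * vec p X)"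
    using dec img by auto
  have Qfacts: "fst p \<in> I \<and> dv (mC (fst p)) y \<and> snd p = y - mC (fst p)"
    if "p \<in> P" "wt p = y" for p y
    using that add_eq_iff_dv[of y "snd p" "mC (fst p)"] unfolding P_def wt_def by auto
  have Dlem: "(\<lambda>X. Fv y C X - Fv y D X) \<in> module_span (LS I :: ('a set \<Rightarrow> ('a,'k) mpoly) set)"
    if h: "C \<in> I" "D \<in> I" "dv (mC C) y" "dv (mC D) y" for C D y
  proof -
    obtain ps where ps: "is_path I cover_adj ps" "hd ps = C" "last ps = D" "\<forall>X\<in>set ps. X \<subseteq> C \<union> D"
      using paths[OF h(1,2)] by blast
    have "\<forall>X\<in>set ps. dv (mC X) y" using ps(4) h(3,4) unfolding dv_mC by blast
    then have "(\<lambda>X. Fv y (hd ps) X - Fv y (last ps) X) \<in> module_span (LS I :: ('a set \<Rightarrow> ('a,'k) mpoly) set)"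
      using path_chain[OF eqc fin] ps(1) unfolding is_path_succ by blast
    then show ?thesis using ps(2,3) by simp
  qed
  have "(\<lambda>X. \<Sum>y\<in>wt ` P. \<Sum>p\<in>{p. p \<in> P \<and> wt p = y}. Poly_Mapping.single 0 (a p) * vec p X)
      \<in> module_span (LS I :: ('a set \<Rightarrow> ('a,'k) mpoly) set)"
  proof (rule span_sum)
    show "finite (wt ` P)" using finP by simp
    fix y assume "y \<in> wt ` P"
    then obtain p0 where p0: "p0 \<in> P" "wt p0 = y" by auto
    define Q where "Q = {p. p \<in> P \<and> wt p = y}"
    have finQ: "finite Q" unfolding Q_def using finP by simp
    have vecQ: "vec p = Fv y (fst p)" if "p \<in> Q" for p
      using Qfacts[of p y] that unfolding Q_def by (auto simp: vec_def Fv_def fun_eq_iff)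
    have suma: "(\<Sum>p\<in>Q. a p) = 0"
    proof -
      have inj: "inj_on fst Q"
      proof (rule inj_onI)
        fix p q assume pq: "p \<in> Q" "q \<in> Q" "fst p = fst q"
        have "snd p = y - mC (fst p)" "snd q = y - mC (fst q)"
          using pq(1,2) Qfacts unfolding Q_def by blast+
        then show "p = q" using pq(3) by (simp add: prod_eq_iff)
      qed
      have "(\<Sum>p\<in>Q. a p) = (\<Sum>C\<in>fst ` Q. Poly_Mapping.lookup (v C) (y - mC C))"
        by (subst sum.reindex[OF inj]) (auto simp: a_def Q_def dest: Qfacts intro!: sum.cong)
      also have "\<dots> = (\<Sum>C\<in>{C\<in>I. dv (mC C) y}. Poly_Mapping.lookup (v C) (y - mC C))"
      proof (rule sum.mono_neutral_left)
        show "finite {C\<in>I. dv (mC C) y}" using fin by simp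
        show "fst ` Q \<subseteq> {C\<in>I. dv (mC C) y}" using Qfacts unfolding Q_def by auto
        show "\<forall>C\<in>{C\<in>I. dv (mC C) y} - fst ` Q. Poly_Mapping.lookup (v C) (y - mC C) = 0"
        proof
          fix C assume C: "C \<in> {C\<in>I. dv (mC C) y} - fst ` Q"
          show "Poly_Mapping.lookup (v C) (y - mC C) = 0"
          proof (rule ccontr)
            assume "Poly_Mapping.lookup (v C) (y - mC C) \<noteq> 0"
            then have "(C, y - mC C) \<in> P" using C unfolding P_def by (auto simp: in_keys_iff)
            moreover have "wt (C, y - mC C) = y" using C by (simp add: wt_def dv_diff_add)
            ultimately have "(C, y - mC C) \<in> Q" unfolding Q_def by simp
            then show False using C by force
          qed
        qed
      qed
      also have "\<dots> = 0" by (rule syz_coeff[OF v fin])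
      finally show ?thesis .
    qed
    have eq: "(\<lambda>X. \<Sum>p\<in>Q. Poly_Mapping.single 0 (a p) * vec p X) =
        (\<lambda>X. \<Sum>p\<in>Q. Poly_Mapping.single 0 (a p) * (Fv y (fst p) X - Fv y (fst p0) X))"
    proof
      fix X
      have "(\<Sum>p\<in>Q. Poly_Mapping.single 0 (a p) * vec p X) =
          (\<Sum>p\<in>Q. Poly_Mapping.single 0 (a p) * (Fv y (fst p) X - Fv y (fst p0) X))
          + (\<Sum>p\<in>Q. Poly_Mapping.single 0 (a p)) * Fv y (fst p0) X"
        by (simp add: sum_distrib_right sum.distrib[symmetric] vecQ right_diff_distrib)
      also have "(\<Sum>p\<in>Q. Poly_Mapping.single 0 (a p)) = (0 :: ('a,'k) mpoly)"
        using suma by (simp flip: single_sum)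
      finally show "(\<Sum>p\<in>Q. Poly_Mapping.single 0 (a p) * vec p X) =
          (\<Sum>p\<in>Q. Poly_Mapping.single 0 (a p) * (Fv y (fst p) X - Fv y (fst p0) X))" by simp
    qed
    have p0Q: "fst p0 \<in> I" "dv (mC (fst p0)) y" using Qfacts p0 by auto
    have "(\<lambda>X. \<Sum>p\<in>Q. Poly_Mapping.single 0 (a p) * (Fv y (fst p) X - Fv y (fst p0) X))
        \<in> module_span (LS I :: ('a set \<Rightarrow> ('a,'k) mpoly) set)"
    proof (rule span_sum[OF finQ])
      fix p assume "p \<in> Q"
      then have "fst p \<in> I" "dv (mC (fst p)) y" using Qfacts unfolding Q_def by auto
      then show "(\<lambda>X. Poly_Mapping.single 0 (a p) * (Fv y (fst p) X - Fv y (fst p0) X))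
          \<in> module_span (LS I :: ('a set \<Rightarrow> ('a,'k) mpoly) set)"
        using Dlem p0Q by (intro span_smult) blast
    qed
    then show "(\<lambda>X. \<Sum>p\<in>{p. p \<in> P \<and> wt p = y}. Poly_Mapping.single 0 (a p) * vec p X)
        \<in> module_span (LS I :: ('a set \<Rightarrow> ('a,'k) mpoly) set)"
      using eq unfolding Q_def by simp
  qed
  then show ?thesis using vdec by simp
qed

lemma mC_of_le:
  assumes "\<forall>x. Poly_Mapping.lookup w' x \<le> Poly_Mapping.lookup (mC S) x"
  shows "w' = mC {x. 0 < Poly_Mapping.lookup w' x}"
proof (rule poly_mapping_eqI)
  fix x
  have "Poly_Mapping.lookup w' x \<le> 1" using assms[rule_format, of x] by (simp add: lookup_mC split: if_splits)
  then show "Poly_Mapping.lookup w' x = Poly_Mapping.lookup (mC {x. 0 < Poly_Mapping.lookup w' x}) x"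
    by (auto simp: lookup_mC)
qed

lemma conn:
  fixes I :: "'a::finite set set"
  assumes fin: "finite I"
    and eqc: "\<forall>C\<in>I. \<forall>D\<in>I. card C = card D"
    and sp: "syzygies I (\<lambda>C. cover_monomial C :: ('a,'k::field) mpoly) \<subseteq> module_span (LS I :: ('a set \<Rightarrow> ('a,'k) mpoly) set)"
    and CD: "C \<in> I" "D \<in> I"
  shows "\<exists>ps. is_path {X\<in>I. X \<subseteq> C \<union> D} cover_adj ps \<and> hd ps = C \<and> last ps = D"
proof (rule ccontr)
  assume nex: "\<not> ?thesis"
  define A where "A = {X\<in>I. X \<subseteq> C \<union> D}"
  define K where "K = {X. \<exists>ps. is_path A cover_adj ps \<and> hd ps = C \<and> last ps = X}"
  define w where "w = mC (C \<union> D)"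
  define \<phi> :: "('a set \<Rightarrow> ('a,'k) mpoly) \<Rightarrow> 'k"
    where "\<phi> v = (\<Sum>X\<in>K. Poly_Mapping.lookup (v X) (w - mC X))" for v
  have KA: "K \<subseteq> A"
  proof
    fix X assume "X \<in> K"
    then obtain ps where ps: "is_path A cover_adj ps" "last ps = X" unfolding K_def by blast
    then have "ps \<noteq> []" "set ps \<subseteq> A" unfolding is_path_def by auto
    then show "X \<in> A" using ps(2) last_in_set by blast
  qed
  have finK: "finite K" by simp
  have CA: "C \<in> A" unfolding A_def using CD by auto
  have CK: "C \<in> K" unfolding K_def
    by (rule CollectI, rule exI[of _ "[C]"]) (use CA in \<open>simp add: is_path_def\<close>)
  have DK: "D \<notin> K" using nex unfolding K_def A_def by blast
  have CnD: "C \<noteq> D" using CK DK by auto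
  have clos: "Y \<in> K" if h: "X \<in> K" "Y \<in> A" "cover_adj X Y" for X Y
  proof -
    obtain ps where "is_path A cover_adj ps" "hd ps = C" "last ps = X" using h(1) unfolding K_def by blast
    then show ?thesis using is_path_extend[of A cover_adj ps Y] h(2,3) unfolding K_def by auto
  qed
  have dvK: "dv (mC X) w" if "X \<in> K" for X using that KA unfolding A_def w_def by (auto simp: dv_mC_mC)
  have phi_sum: "\<phi> (\<lambda>i. \<Sum>g\<in>G. f g i) = (\<Sum>g\<in>G. \<phi> (f g))" if "finite G" for G f
    unfolding \<phi>_def by (simp add: lookup_sum sum.swap[of _ K])
  have key0: "\<phi> (\<lambda>i. Poly_Mapping.single \<nu> b * g i) = 0" if gL: "g \<in> LS I" for g \<nu> b
  proof -
    have gs: "g \<in> syzygies I (\<lambda>C. cover_monomial C :: ('a,'k) mpoly)" and gl: "\<And>i. linear_form (g i)"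
      using gL by auto
    have "\<phi> (\<lambda>i. Poly_Mapping.single \<nu> b * g i) =
        (\<Sum>X\<in>K. if dv \<nu> (w - mC X) then b * Poly_Mapping.lookup (g X) (w - mC X - \<nu>) else 0)"
      unfolding \<phi>_def by (simp add: lookup_single_mult)
    also have "\<dots> = 0"
    proof (cases "dv \<nu> w")
      case False
      then show ?thesis using dv_diff_mono[of \<nu> w] by (intro sum.neutral) auto
    next
      case True
      define w' where "w' = w - \<nu>"
      define h where "h X = Poly_Mapping.lookup (g X) (w' - mC X)" for X
      have "(\<Sum>X\<in>K. if dv \<nu> (w - mC X) then b * Poly_Mapping.lookup (g X) (w - mC X - \<nu>) else 0)
          = (\<Sum>X\<in>K. if dv (mC X) w' then b * h X else 0)"
      proof (rule sum.cong[OF refl])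
        fix X assume "X \<in> K"
        then have "dv \<nu> (w - mC X) \<longleftrightarrow> dv (mC X) w'" unfolding w'_def using dv_swap dvK True by blast
        moreover have "w - mC X - \<nu> = w' - mC X" unfolding w'_def by (rule diff_right_commute)
        ultimately show "(if dv \<nu> (w - mC X) then b * Poly_Mapping.lookup (g X) (w - mC X - \<nu>) else 0)
          = (if dv (mC X) w' then b * h X else 0)" by (simp add: h_def)
      qed
      also have "\<dots> = b * (\<Sum>X\<in>{X\<in>K. dv (mC X) w'}. h X)"
        by (simp add: sum.inter_filter[OF finK] sum_distrib_left if_distrib cong: if_cong)
      also have "(\<Sum>X\<in>{X\<in>K. dv (mC X) w'}. h X) = 0"
      proof -
        define T where "T = {X\<in>I. dv (mC X) w'}"
        define N where "N = {X\<in>T. h X \<noteq> 0}"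
        define K' where "K' = {X\<in>K. dv (mC X) w'}"
        have finT: "finite T" unfolding T_def using fin by simp
        have finK': "finite K'" unfolding K'_def using finK by simp
        have sT: "(\<Sum>X\<in>T. h X) = 0" unfolding T_def h_def by (rule syz_coeff[OF gs fin])
        have "N \<subseteq> T" unfolding N_def by blast
        moreover have "\<forall>X\<in>T - N. h X = 0" unfolding N_def by blast
        ultimately have "(\<Sum>X\<in>N. h X) = (\<Sum>X\<in>T. h X)" by (rule sum.mono_neutral_left[OF finT])
        then have sN: "(\<Sum>X\<in>N. h X) = 0" using sT by simp
        have "K' \<inter> N \<subseteq> K'" by blast
        moreover have "\<forall>X\<in>K' - K' \<inter> N. h X = 0"
        proof
          fix X assume X: "X \<in> K' - K' \<inter> N"
          then have "X \<in> K" "dv (mC X) w'" unfolding K'_def by auto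
          then have "X \<in> T" using KA unfolding T_def A_def by blast
          then show "h X = 0" using X unfolding N_def by blast
        qed
        ultimately have sK': "(\<Sum>X\<in>K' \<inter> N. h X) = (\<Sum>X\<in>K'. h X)"
          by (rule sum.mono_neutral_left[OF finK'])
        have wle: "\<forall>x. Poly_Mapping.lookup w' x \<le> Poly_Mapping.lookup (mC (C \<union> D)) x"
          unfolding w'_def w_def by (simp add: lookup_minus)
        define S' where "S' = {x. 0 < Poly_Mapping.lookup w' x}"
        have w'eq: "w' = mC S'" unfolding S'_def by (rule mC_of_le[OF wle])
        have cardN: "card S' = card Z + 1" "Z \<subseteq> S'" if "Z \<in> N" for Z
        proof -
          have Zs: "Z \<subseteq> S'" using that unfolding N_def T_def w'eq by (auto simp: dv_mC_mC)
          have "w' - mC Z \<in> Poly_Mapping.keys (g Z)" using that unfolding N_def h_def by (simp add: in_keys_iff)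
          then have "mdeg (w' - mC Z) = 1" using gl[of Z] unfolding linear_form_def homogeneous_of_degree_def by blast
          then have "card (S' - Z) = 1" unfolding w'eq using Zs by (simp add: mC_diff mdeg_mC)
          moreover have "card (S' - Z) = card S' - card Z" using Zs by (simp add: card_Diff_subset)
          moreover have "card Z \<le> card S'" using Zs by (simp add: card_mono)
          ultimately show "card S' = card Z + 1" "Z \<subseteq> S'" using Zs by auto
        qed
        have NA: "N \<subseteq> A"
        proof
          fix Y assume "Y \<in> N"
          then have "Y \<in> I" "dv (mC Y) w'" unfolding N_def T_def by auto
          then have "Y \<subseteq> S'" unfolding w'eq by (simp add: dv_mC_mC)
          moreover have "S' \<subseteq> C \<union> D"
          proof
            fix x assume "x \<in> S'"
            then have "0 < Poly_Mapping.lookup w' x" unfolding S'_def by simp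
            moreover have "Poly_Mapping.lookup w' x \<le> Poly_Mapping.lookup (mC (C \<union> D)) x" using wle by blast
            ultimately show "x \<in> C \<union> D" by (simp add: lookup_mC split: if_splits)
          qed
          ultimately show "Y \<in> A" using \<open>Y \<in> I\<close> unfolding A_def by auto
        qed
        show ?thesis
        proof (cases "K' \<inter> N = {}")
          case True
          then show ?thesis using sK' unfolding K'_def by simp
        next
          case False
          then obtain X0 where X0: "X0 \<in> K'" "X0 \<in> N" by auto
          have "N \<subseteq> K'"
          proof
            fix Y assume Y: "Y \<in> N"
            have "Y \<in> K"
            proof (cases "Y = X0")
              case True then show ?thesis using X0 unfolding K'_def by simp
            next
              case False
              have c1: "card S' = card X0 + 1" "X0 \<subseteq> S'" using cardN X0(2) by auto
              have c2: "Y \<subseteq> S'" using cardN Y by auto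
              have YI: "Y \<in> I" "X0 \<in> I" using Y X0(2) unfolding N_def T_def by auto
              have ceq: "card Y = card X0" using eqc YI by blast
              have "\<not> Y \<subseteq> X0"
              proof
                assume "Y \<subseteq> X0"
                then have "Y = X0" using ceq by (simp add: card_subset_eq)
                then show False using False by simp
              qed
              then have "X0 \<subset> X0 \<union> Y" by auto
              then have "card X0 < card (X0 \<union> Y)" by (simp add: psubset_card_mono)
              moreover have "card (X0 \<union> Y) \<le> card S'" using c1 c2 card_mono[of S' "X0 \<union> Y"] by simp
              ultimately have "card (X0 \<union> Y) = card X0 + 1" using c1 by simp
              then have "cover_adj X0 Y" unfolding cover_adj_def using False by auto
              then show ?thesis using clos X0(1) NA Y unfolding K'_def by auto
            qed
            then show "Y \<in> K'" using Y unfolding K'_def N_def T_def by auto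
          qed
          then have "K' \<inter> N = N" by auto
          then show ?thesis using sK' sN unfolding K'_def by simp
        qed
      qed
      finally show ?thesis by simp
    qed
    finally show ?thesis .
  qed
  have key: "\<phi> (\<lambda>i. c * g i) = 0" if "g \<in> LS I" for g c
  proof -
    have "(\<lambda>i. c * g i) = (\<lambda>i. \<Sum>\<nu>\<in>Poly_Mapping.keys c. Poly_Mapping.single \<nu> (Poly_Mapping.lookup c \<nu>) * g i)"
      by (simp add: sum_distrib_right[symmetric] poly_expand)
    then have "\<phi> (\<lambda>i. c * g i) = (\<Sum>\<nu>\<in>Poly_Mapping.keys c. \<phi> (\<lambda>i. Poly_Mapping.single \<nu> (Poly_Mapping.lookup c \<nu>) * g i))"
      using phi_sum[of "Poly_Mapping.keys c" "\<lambda>\<nu> i. Poly_Mapping.single \<nu> (Poly_Mapping.lookup c \<nu>) * g i"] by simp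
    also have "\<dots> = 0" using key0[OF that] by simp
    finally show ?thesis .
  qed
  define \<sigma> where "\<sigma> = (\<lambda>X. Fv w C X - Fv w D X :: ('a,'k) mpoly)"
  have "\<sigma> \<in> syzygies I (\<lambda>C. cover_monomial C :: ('a,'k) mpoly)"
    unfolding \<sigma>_def by (rule Fdiff_syz) (use CD CnD fin in \<open>auto simp: w_def dv_mC_mC\<close>)
  then have "\<sigma> \<in> module_span (LS I)" using sp by blast
  then obtain F c where Fc: "finite F" "F \<subseteq> LS I" "\<sigma> = (\<lambda>i. \<Sum>g\<in>F. c g * g i)"
    unfolding module_span_def by blast
  have "\<phi> \<sigma> = (\<Sum>g\<in>F. \<phi> (\<lambda>i. c g * g i))" unfolding Fc(3) by (rule phi_sum[OF Fc(1)])
  also have "\<dots> = 0" using key Fc(2) by (intro sum.neutral) blast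
  finally have z: "\<phi> \<sigma> = 0" .
  have "\<phi> \<sigma> = (\<Sum>X\<in>K. if X = C then 1 else 0)"
    unfolding \<phi>_def
  proof (rule sum.cong[OF refl])
    fix X assume "X \<in> K"
    then have "X \<noteq> D" using DK by auto
    then show "Poly_Mapping.lookup (\<sigma> X) (w - mC X) = (if X = C then 1 else 0)"
      unfolding \<sigma>_def Fv_def by simp
  qed
  also have "\<dots> = 1" using CK finK by simp
  finally show False using z by simp
qed

lemma Y_minus_Z:
  fixes Y Z :: "'a::finite set"
  assumes "cover_adj Y Z" "card Y = card Z"
  obtains x where "Y - Z = {x}"
  using card_diff_one[OF assms] by (meson card_1_singletonE)

lemma path_facts:
  assumes "is_path V adj ps" "Suc j < length ps"
  shows "set (take (Suc (Suc j)) ps) = insert (ps ! Suc j) (set (take (Suc j) ps))"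
    "ps ! j \<in> set (take (Suc j) ps)" "adj (ps ! j) (ps ! Suc j)"
    "ps ! j \<in> V" "ps ! Suc j \<in> V"
proof -
  show "set (take (Suc (Suc j)) ps) = insert (ps ! Suc j) (set (take (Suc j) ps))"
    using assms(2) by (simp add: take_Suc_conv_app_nth insert_commute)
  show "ps ! j \<in> set (take (Suc j) ps)" using assms(2)
    by (metis Suc_lessD lessI nth_mem nth_take length_take min_less_iff_conj)
  show "adj (ps ! j) (ps ! Suc j)" using assms unfolding is_path_def by blast
  have "ps ! j \<in> set ps" "ps ! Suc j \<in> set ps" using assms(2) by simp_all
  then show "ps ! j \<in> V" "ps ! Suc j \<in> V" using assms(1) unfolding is_path_def by auto
qed

lemma take_path: "is_path V adj ps \<Longrightarrow> j < length ps \<Longrightarrow> is_path V adj (take (Suc j) ps) \<and> length (take (Suc j) ps) = Suc j"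
  using is_path_take[of V adj ps "Suc j"] by simp

lemma hd0_in_take: "ps \<noteq> [] \<Longrightarrow> hd ps \<in> set (take (Suc j) ps)"
  by (cases ps) auto

theorem corollary4p7:
  fixes E :: "'a::finite set set"
  assumes "simple_graph E"
    and "unmixed E"
    and "is_tree (min_covers E) cover_adj"
  shows "linearly_presented (min_covers E)
           (\<lambda>C. cover_monomial C :: ('a, 'k::field) mpoly)
         \<longleftrightarrow> (\<forall>ps. is_path (min_covers E) cover_adj ps \<longrightarrow>
                alpha0 E \<ge> length ps - 1 \<and>
                card (\<Inter>(set ps)) = alpha0 E - (length ps - 1))"
proof -
  define I where "I = min_covers E"
  have fin: "finite I" by simp
  have eqc: "\<forall>C\<in>I. \<forall>D\<in>I. card C = card D" using assms(2) unfolding I_def unmixed_def by blast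
  have al: "alpha0 E = card C" if "C \<in> I" for C using alpha0_eq[OF assms(2)] that unfolding I_def by blast
  have sym: "cover_adj y x" if "x \<in> I" "y \<in> I" "cover_adj x y" for x y
    using that eqc unfolding cover_adj_def by (metis Un_commute)
  have connI: "connected_graph I cover_adj" and nc: "\<not> has_cycle I cover_adj"
    using assms(3) unfolding is_tree_def I_def by auto
  have hom: "\<exists>d. \<forall>i\<in>I. homogeneous_of_degree d (cover_monomial i :: ('a,'k) mpoly)"
  proof (rule exI[of _ "alpha0 E"], rule ballI)
    fix i assume "i \<in> I"
    then show "homogeneous_of_degree (alpha0 E) (cover_monomial i :: ('a,'k) mpoly)"
      unfolding homogeneous_of_degree_def cover_monomial_eq using al by (simp add: mdeg_mC)
  qed
  have sub: "module_span (LS I) \<subseteq> syzygies I (\<lambda>C. cover_monomial C :: ('a,'k) mpoly)"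
    using span_syz[of "LS I" I] by blast
  have LP: "linearly_presented I (\<lambda>C. cover_monomial C :: ('a,'k) mpoly) \<longleftrightarrow>
      syzygies I (\<lambda>C. cover_monomial C :: ('a,'k) mpoly) \<subseteq> module_span (LS I)"
    unfolding linearly_presented_def using hom sub by blast
  show ?thesis
    unfolding I_def[symmetric] LP
  proof
    assume sp: "syzygies I (\<lambda>C. cover_monomial C :: ('a,'k) mpoly) \<subseteq> module_span (LS I)"
    show "\<forall>ps. is_path I cover_adj ps \<longrightarrow> length ps - 1 \<le> alpha0 E \<and> card (\<Inter>(set ps)) = alpha0 E - (length ps - 1)"
    proof (intro allI impI)
      fix ps assume ps: "is_path I cover_adj ps"
      have P: "ps ! k \<subseteq> ps ! i \<union> ps ! l" if ikl: "i \<le> k" "k \<le> l" "l < length ps" for i k l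
      proof -
        define q0 where "q0 = drop i (take (Suc l) ps)"
        have lt: "i < length (take (Suc l) ps)" using ikl by simp
        have q0p: "is_path I cover_adj q0" unfolding q0_def
          by (rule is_path_drop[OF is_path_take[OF ps] lt]) simp
        have hq0: "hd q0 = ps ! i" unfolding q0_def using lt ikl by (simp add: hd_drop_conv_nth)
        have lq0: "last q0 = ps ! l" unfolding q0_def using lt ikl
          by (simp add: last_conv_nth)
        have kq0: "ps ! k \<in> set q0"
        proof -
          have "q0 ! (k - i) = ps ! k" unfolding q0_def using ikl by simp
          moreover have "k - i < length q0" unfolding q0_def using ikl by simp
          ultimately show ?thesis by (metis nth_mem)
        qed
        have ilI: "ps ! i \<in> I" "ps ! l \<in> I" using ps ikl unfolding is_path_def by auto
        obtain q where q: "is_path {X\<in>I. X \<subseteq> ps ! i \<union> ps ! l} cover_adj q" "hd q = ps ! i" "last q = ps ! l"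
          using conn[OF fin eqc sp ilI] by blast
        have qI: "is_path I cover_adj q" using q(1) unfolding is_path_def by auto
        have "q = q0" by (rule path_unique[OF sym nc qI q0p]) (use q hq0 lq0 in auto)
        then have "ps ! k \<in> {X\<in>I. X \<subseteq> ps ! i \<union> ps ! l}" using q(1) kq0 unfolding is_path_def by auto
        then show ?thesis by simp
      qed
      have ne: "ps \<noteq> []" using ps unfolding is_path_def by simp
      have claim: "j \<le> alpha0 E \<and> card (\<Inter>(set (take (Suc j) ps))) = alpha0 E - j" if "j < length ps" for j
        using that
      proof (induction j)
        case 0
        have "ps ! 0 \<in> I" using ps ne unfolding is_path_def by auto
        then show ?case using ne al by (cases ps) auto
      next
        case (Suc j)
        note pf = path_facts[OF ps Suc.prems]
        define S where "S = set (take (Suc j) ps)"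
        define Y where "Y = ps ! j"
        define Z where "Z = ps ! Suc j"
        have ih: "j \<le> alpha0 E" "card (\<Inter>S) = alpha0 E - j" using Suc.IH Suc.prems unfolding S_def by auto
        have YI: "Y \<in> I" "Z \<in> I" using pf unfolding Y_def Z_def by auto
        obtain x where x: "Y - Z = {x}" using Y_minus_Z[of Y Z] pf(3) eqc YI unfolding Y_def Z_def by blast
        have xall: "x \<in> X" if hX: "X \<in> S" for X
        proof -
          obtain i where i: "i < length (take (Suc j) ps)" "X = take (Suc j) ps ! i"
            using hX unfolding S_def by (metis in_set_conv_nth)
          then have "i \<le> j" "X = ps ! i" by auto
          then have "Y \<subseteq> X \<union> Z" using P[of i j "Suc j"] Suc.prems unfolding Y_def Z_def by auto
          then show "x \<in> X" using x by auto
        qed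
        have YS: "Y \<in> S" using pf(2) unfolding S_def Y_def .
        have Sx: "x \<in> \<Inter>S" using xall by auto
        have "\<Inter>(insert Z S) = \<Inter>S - {x}"
        proof
          show "\<Inter>(insert Z S) \<subseteq> \<Inter>S - {x}" using x by auto
          show "\<Inter>S - {x} \<subseteq> \<Inter>(insert Z S)"
          proof
            fix t assume t: "t \<in> \<Inter>S - {x}"
            then have "t \<in> Y" using YS by auto
            then have "t \<in> Z" using x t by auto
            then show "t \<in> \<Inter>(insert Z S)" using t by auto
          qed
        qed
        then have "card (\<Inter>(insert Z S)) = card (\<Inter>S) - 1" using Sx by (simp add: card_Diff_singleton)
        moreover have "card (\<Inter>S) \<ge> 1" using Sx by (metis One_nat_def Suc_leI card_gt_0_iff empty_iff finite)
        ultimately show ?case using ih pf(1) unfolding S_def Z_def by auto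
      qed
      have "length ps - 1 < length ps" using ne by simp
      from claim[OF this] show "length ps - 1 \<le> alpha0 E \<and> card (\<Inter>(set ps)) = alpha0 E - (length ps - 1)"
        using ne by simp
    qed
  next
    assume R: "\<forall>ps. is_path I cover_adj ps \<longrightarrow> length ps - 1 \<le> alpha0 E \<and> card (\<Inter>(set ps)) = alpha0 E - (length ps - 1)"
    show "syzygies I (\<lambda>C. cover_monomial C :: ('a,'k) mpoly) \<subseteq> module_span (LS I)"
    proof
      fix v assume v: "v \<in> syzygies I (\<lambda>C. cover_monomial C :: ('a,'k) mpoly)"
      show "v \<in> module_span (LS I)"
      proof (rule lp_if[OF fin eqc _ v])
        fix C D assume CD: "C \<in> I" "D \<in> I"
        obtain ps where ps: "is_path I cover_adj ps" "hd ps = C" "last ps = D"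
          using connI CD unfolding connected_graph_def by blast
        have ne: "ps \<noteq> []" using ps unfolding is_path_def by simp
        have R': "j \<le> alpha0 E \<and> card (\<Inter>(set (take (Suc j) ps))) = alpha0 E - j" if "j < length ps" for j
          using R take_path[OF ps(1) that] by auto
        have "X \<subseteq> C \<union> D" if X: "X \<in> set ps" for X
        proof
          fix z assume z: "z \<in> X"
          show "z \<in> C \<union> D"
          proof (cases "z \<in> C")
            case True then show ?thesis by simp
          next
            case notC: False
            obtain k where k: "k < length ps" "X = ps ! k" using X by (metis in_set_conv_nth)
            have zprop: "z \<in> ps ! j" if "k \<le> j" "j < length ps" for j
              using that
            proof (induction j)
              case 0 then show ?case using z k by simp
            next
              case (Suc j)
              show ?case
              proof (cases "k \<le> j")
                case False
                then have "k = Suc j" using Suc.prems by simp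
                then show ?thesis using z k by simp
              next
                case True
                note pf = path_facts[OF ps(1) Suc.prems(2)]
                define S where "S = set (take (Suc j) ps)"
                define Y where "Y = ps ! j"
                define Z where "Z = ps ! Suc j"
                have zY: "z \<in> Y" using Suc.IH True Suc.prems unfolding Y_def by simp
                show ?thesis
                proof (rule ccontr)
                  assume zZ: "z \<notin> ps ! Suc j"
                  have YI: "Y \<in> I" "Z \<in> I" using pf unfolding Y_def Z_def by auto
                  obtain x where x: "Y - Z = {x}" using Y_minus_Z[of Y Z] pf(3) eqc YI unfolding Y_def Z_def by blast
                  then have xz: "x = z" using zY zZ unfolding Z_def by auto
                  have hdS: "C \<in> S" using hd0_in_take[OF ne] ps(2) unfolding S_def by simp
                  have YS: "Y \<in> S" using pf(2) unfolding S_def Y_def .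
                  have "\<Inter>(insert Z S) = \<Inter>S"
                  proof
                    show "\<Inter>(insert Z S) \<subseteq> \<Inter>S" by auto
                    show "\<Inter>S \<subseteq> \<Inter>(insert Z S)"
                    proof
                      fix t assume t: "t \<in> \<Inter>S"
                      then have "t \<in> Y" "t \<in> C" using YS hdS by auto
                      then have "t \<in> Z" using x xz notC by auto
                      then show "t \<in> \<Inter>(insert Z S)" using t by auto
                    qed
                  qed
                  moreover have "card (\<Inter>(insert Z S)) = alpha0 E - Suc j" "Suc j \<le> alpha0 E"
                    using R'[OF Suc.prems(2)] pf(1) unfolding S_def Z_def by auto
                  moreover have "card (\<Inter>S) = alpha0 E - j"
                    using R'[of j] Suc.prems unfolding S_def by auto
                  ultimately show False by simp
                qed
              qed
            qed
            have "z \<in> ps ! (length ps - 1)" using zprop[of "length ps - 1"] k by simp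
            then have "z \<in> D" using ps(3) ne by (simp add: last_conv_nth)
            then show ?thesis by simp
          qed
        qed
        then show "\<exists>ps. is_path I cover_adj ps \<and> hd ps = C \<and> last ps = D \<and> (\<forall>X\<in>set ps. X \<subseteq> C \<union> D)"
          using ps by blast
      qed
    qed
  qed
qed

end
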